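(* Let $\lambda_1,\dots,\lambda_n>0$, $S=\{\lambda_1,\dots,\lambda_n\}$ and $\Lambda=\big(\lambda_i\lambda_j+(\lambda_i\lambda_j)^{-1}\big)_{i,j=1}^n\in P(n)$. Then: if all $\lambda_i$ are equal, $I(\Lambda)=\lambda_1^2+\lambda_1^{-2}$; if $S=\{\lambda,\mu\}$ with $\lambda\neq\mu$, then $I(\Lambda)=\dfrac{(\lambda+\mu)^2}{1+\lambda^2\mu^2}$; if $S$ has more than two elements, $I(\Lambda)=0$. In particular $I(\Lambda)\neq0$ iff $S$ has at most two elements.
   Context: $P(n)$ denotes positive semidefinite complex $n\times n$ matrices. With $P$ the all-ones $n\times n$ matrix, $I(A)=\max\{\lambda\ge0: A-\lambda P\ge0\}$. *)

theory Defs
  imports "HOL-Analysis.Analysis"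
begin

definition psd :: "complex ^'n ^'n \<Rightarrow> bool" where
  "psd A \<longleftrightarrow> (\<forall>i j. A $ i $ j = cnj (A $ j $ i)) \<and>
     (\<forall>x :: complex ^'n. 0 \<le> Re (\<Sum>i\<in>UNIV. \<Sum>j\<in>UNIV. cnj (x $ i) * A $ i $ j * x $ j))"

definition ones_mat :: "complex ^'n ^'n" where
  "ones_mat = (\<chi> i j. 1)"

definition Ind :: "complex ^'n ^'n \<Rightarrow> real" where
  "Ind A = (GREATEST t. t \<ge> 0 \<and> psd (A - t *\<^sub>R ones_mat))"

end

theory Submission
  imports Defs
begin

lemma quad1:
  fixes a :: "'n::finite \<Rightarrow> real" and x :: "complex^'n"
  shows "(\<Sum>i\<in>UNIV. \<Sum>j\<in>UNIV. cnj (x$i) * complex_of_real (a i * a j) * x$j)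
     = cnj (\<Sum>i\<in>UNIV. complex_of_real (a i) * x$i) * (\<Sum>i\<in>UNIV. complex_of_real (a i) * x$i)"
  by (simp add: sum_distrib_left sum_distrib_right mult_ac)

lemma quad3:
  fixes a b :: "'n::finite \<Rightarrow> real" and x :: "complex^'n"
  shows "Re (\<Sum>i\<in>UNIV. \<Sum>j\<in>UNIV. cnj (x$i) * complex_of_real (a i * a j + b i * b j - t) * x$j)
     = (cmod (\<Sum>i\<in>UNIV. complex_of_real (a i) * x$i))^2 + (cmod (\<Sum>i\<in>UNIV. complex_of_real (b i) * x$i))^2
       - t * (cmod (\<Sum>i\<in>UNIV. x$i))^2"
proof -
  have e: "cnj (x$i) * complex_of_real (a i * a j + b i * b j - t) * x$j =
     cnj (x$i) * complex_of_real (a i * a j) * x$j + cnj (x$i) * complex_of_real (b i * b j) * x$j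
     - of_real t * (cnj (x$i) * complex_of_real (1 * 1) * x$j)" for i j
    by (simp add: algebra_simps)
  have "(\<Sum>i\<in>UNIV. \<Sum>j\<in>UNIV. cnj (x$i) * complex_of_real (a i * a j + b i * b j - t) * x$j)
    = cnj (\<Sum>i\<in>UNIV. complex_of_real (a i) * x$i) * (\<Sum>i\<in>UNIV. complex_of_real (a i) * x$i)
    + cnj (\<Sum>i\<in>UNIV. complex_of_real (b i) * x$i) * (\<Sum>i\<in>UNIV. complex_of_real (b i) * x$i)
    - of_real t * (cnj (\<Sum>i\<in>UNIV. complex_of_real 1 * x$i) * (\<Sum>i\<in>UNIV. complex_of_real 1 * x$i))"
    unfolding e sum_subtractf sum.distrib quad1[symmetric] sum_distrib_left[symmetric] by (simp add: sum_distrib_right)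
  also have "Re \<dots> = (cmod (\<Sum>i\<in>UNIV. complex_of_real (a i) * x$i))^2 + (cmod (\<Sum>i\<in>UNIV. complex_of_real (b i) * x$i))^2
       - t * (cmod (\<Sum>i\<in>UNIV. x$i))^2"
    by (simp only: mult.commute[of "cnj _"] complex_norm_square[symmetric] ) simp
  finally show ?thesis .
qed


lemma sum_two:
  fixes g :: "'n::finite \<Rightarrow> real"
  assumes "i \<noteq> j"
  shows "(\<Sum>k\<in>UNIV. g k * (if k = i then A else if k = j then B else 0)) = g i * A + g j * B"
proof -
  have "(\<Sum>k\<in>UNIV. g k * (if k = i then A else if k = j then B else 0))
      = (\<Sum>k\<in>{i,j}. g k * (if k = i then A else if k = j then B else 0))"
    by (rule sum.mono_neutral_right) auto
  then show ?thesis using assms by simp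
qed

lemma sum_three:
  fixes g :: "'n::finite \<Rightarrow> real"
  assumes "i \<noteq> j" "i \<noteq> k" "j \<noteq> k"
  shows "(\<Sum>r\<in>UNIV. g r * (if r = i then A else if r = j then B else if r = k then C else 0))
     = g i * A + g j * B + g k * C"
proof -
  have "(\<Sum>r\<in>UNIV. g r * (if r = i then A else if r = j then B else if r = k then C else 0))
      = (\<Sum>r\<in>{i,j,k}. g r * (if r = i then A else if r = j then B else if r = k then C else 0))"
    by (rule sum.mono_neutral_right) auto
  then show ?thesis using assms by simp
qed

lemma psd_char:
  fixes lam :: "'n::finite \<Rightarrow> real"
  defines "L \<equiv> (\<chi> i j. complex_of_real (lam i * lam j + inverse (lam i * lam j))) :: complex^'n^'n"
  shows "psd (L - t *\<^sub>R ones_mat) \<longleftrightarrow>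
    (\<forall>x::complex^'n. t * (cmod (\<Sum>i\<in>UNIV. x$i))^2 \<le>
        (cmod (\<Sum>i\<in>UNIV. complex_of_real (lam i) * x$i))^2 + (cmod (\<Sum>i\<in>UNIV. complex_of_real (inverse (lam i)) * x$i))^2)"
proof -
  have ent: "(L - t *\<^sub>R ones_mat) $ i $ j = complex_of_real (lam i * lam j + inverse (lam i) * inverse (lam j) - t)" for i j
    by (simp add: L_def ones_mat_def inverse_mult_distrib of_real_def scaleR_diff_left)
  have herm: "(L - t *\<^sub>R ones_mat) $ i $ j = cnj ((L - t *\<^sub>R ones_mat) $ j $ i)" for i j
    unfolding ent by (simp add: mult.commute)
  show ?thesis unfolding psd_def ent quad3 using herm by (auto simp: ent)
qed

lemma real_witness:
  fixes lam :: "'n::finite \<Rightarrow> real" and w :: "'n \<Rightarrow> real"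
  assumes "\<forall>x::complex^'n. t * (cmod (\<Sum>i\<in>UNIV. x$i))^2 \<le>
        (cmod (\<Sum>i\<in>UNIV. complex_of_real (lam i) * x$i))^2 + (cmod (\<Sum>i\<in>UNIV. complex_of_real (inverse (lam i)) * x$i))^2"
  shows "t * (\<Sum>i\<in>UNIV. w i)^2 \<le> (\<Sum>i\<in>UNIV. lam i * w i)^2 + (\<Sum>i\<in>UNIV. inverse (lam i) * w i)^2"
proof -
  have "t * (cmod (\<Sum>i\<in>UNIV. (\<chi> k. complex_of_real (w k))$i))^2 \<le>
        (cmod (\<Sum>i\<in>UNIV. complex_of_real (lam i) * (\<chi> k. complex_of_real (w k))$i))^2 + (cmod (\<Sum>i\<in>UNIV. complex_of_real (inverse (lam i)) * (\<chi> k. complex_of_real (w k))$i))^2"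
    using assms by blast
  then show ?thesis by (simp add: of_real_sum[symmetric] of_real_mult[symmetric] of_real_inverse[symmetric] del: of_real_sum of_real_mult of_real_inverse)
qed

lemma Ind_eq:
  assumes "t0 \<ge> 0" "psd (A - t0 *\<^sub>R ones_mat)" "\<And>t. t \<ge> 0 \<Longrightarrow> psd (A - t *\<^sub>R ones_mat) \<Longrightarrow> t \<le> t0"
  shows "Ind A = t0"
  unfolding Ind_def using assms by (intro Greatest_equality) auto


lemma sum_one:
  fixes g :: "'n::finite \<Rightarrow> real"
  shows "(\<Sum>k\<in>UNIV. g k * (if k = i then 1 else 0)) = g i"
proof -
  have "(\<Sum>k\<in>UNIV. g k * (if k = i then 1 else 0)) = (\<Sum>k\<in>{i}. g k * (if k = i then 1 else 0))"
    by (rule sum.mono_neutral_right) auto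
  then show ?thesis by simp
qed

lemma cs_ineq:
  fixes a b c :: real
  shows "(a + c * b)^2 \<le> (1 + c^2) * (a^2 + b^2)"
proof -
  have "0 \<le> (c * a - b)^2" by simp
  then show ?thesis by (simp add: power2_eq_square algebra_simps)
qed

theorem mainTheorem13:
  fixes lam :: "'n::finite \<Rightarrow> real"
  assumes pos: "\<And>i. lam i > 0"
  defines "S \<equiv> range lam"
    and "L \<equiv> (\<chi> i j. complex_of_real (lam i * lam j + inverse (lam i * lam j))) :: complex^'n^'n"
  shows "psd L
    \<and> (\<forall>l. S = {l} \<longrightarrow> Ind L = l^2 + inverse (l^2))
    \<and> (\<forall>l m. l \<noteq> m \<and> S = {l, m} \<longrightarrow> Ind L = (l + m)^2 / (1 + l^2 * m^2))
    \<and> (card S > 2 \<longrightarrow> Ind L = 0)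
    \<and> (Ind L \<noteq> 0 \<longleftrightarrow> card S \<le> 2)"
proof -
  define P where "P x = (\<Sum>i\<in>UNIV. complex_of_real (lam i) * x$i)" for x :: "complex^'n"
  define Q where "Q x = (\<Sum>i\<in>UNIV. complex_of_real (inverse (lam i)) * x$i)" for x :: "complex^'n"
  define s where "s x = (\<Sum>i\<in>UNIV. x$i)" for x :: "complex^'n"
  have char: "psd (L - t *\<^sub>R ones_mat) \<longleftrightarrow> (\<forall>x. t * (cmod (s x))^2 \<le> (cmod (P x))^2 + (cmod (Q x))^2)" for t
    using psd_char[of lam t] unfolding L_def P_def Q_def s_def by simp
  have wit: "t * (\<Sum>i\<in>UNIV. w i)^2 \<le> (\<Sum>i\<in>UNIV. lam i * w i)^2 + (\<Sum>i\<in>UNIV. inverse (lam i) * w i)^2"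
    if "psd (L - t *\<^sub>R ones_mat)" for t w
    using real_witness[of t lam w] that unfolding char P_def Q_def s_def by blast
  have psdL: "psd L" using char[of 0] by simp
  have fin: "finite S" unfolding S_def by simp
  have Spos: "l \<in> S \<Longrightarrow> l > 0" for l using pos unfolding S_def by auto
  have one: "Ind L = l^2 + inverse (l^2)" if S1: "S = {l}" for l
  proof -
    have all: "lam i = l" for i using S1 unfolding S_def by auto
    have lp: "l > 0" using Spos S1 by auto
    show ?thesis
    proof (rule Ind_eq)
      show "0 \<le> l^2 + inverse (l^2)" by simp
      show "psd (L - (l^2 + inverse (l^2)) *\<^sub>R ones_mat)" unfolding char
      proof
        fix x
        have "P x = complex_of_real l * s x" unfolding P_def s_def by (simp add: all sum_distrib_left)
        moreover have "Q x = complex_of_real (inverse l) * s x" unfolding Q_def s_def by (simp add: all sum_distrib_left)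
        ultimately show "(l^2 + inverse (l^2)) * (cmod (s x))^2 \<le> (cmod (P x))^2 + (cmod (Q x))^2"
          using lp by (simp add: norm_mult norm_inverse power_mult_distrib power_inverse algebra_simps)
      qed
      fix t assume "0 \<le> t" "psd (L - t *\<^sub>R ones_mat)"
      from wit[OF this(2), of "\<lambda>k. if k = undefined then 1 else 0"]
      show "t \<le> l^2 + inverse (l^2)" by (simp add: sum_one all power_inverse)
    qed
  qed
  have two: "Ind L = (l + m)^2 / (1 + l^2 * m^2)" if lm: "l \<noteq> m" "S = {l, m}" for l m
  proof -
    have all: "lam i = l \<or> lam i = m" for i using lm unfolding S_def by auto
    have lp: "l > 0" and mp: "m > 0" using Spos lm by auto
    obtain i where i: "lam i = l" using lm unfolding S_def by (metis insertI1 imageE)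
    obtain j where j: "lam j = m" using lm unfolding S_def by (metis insertI1 insertI2 imageE)
    have ij: "i \<noteq> j" using i j lm by auto
    have D: "1 + l^2 * m^2 > 0" by (simp add: add_pos_nonneg)
    show ?thesis
    proof (rule Ind_eq)
      show "0 \<le> (l + m)^2 / (1 + l^2 * m^2)" using D by simp
      show "psd (L - ((l + m)^2 / (1 + l^2 * m^2)) *\<^sub>R ones_mat)" unfolding char
      proof
        fix x
        have c: "complex_of_real (l + m) = complex_of_real (lam k) + complex_of_real (l * m) * complex_of_real (inverse (lam k))" for k
          using all[of k] lp mp by (auto simp: field_simps)
        have "complex_of_real (l + m) * s x = P x + complex_of_real (l * m) * Q x"
          unfolding P_def Q_def s_def sum_distrib_left sum.distrib[symmetric]
          by (rule sum.cong[OF refl], subst c) (simp only: distrib_right mult.assoc)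
        then have "cmod (complex_of_real (l + m) * s x) \<le> cmod (P x) + cmod (complex_of_real (l * m) * Q x)"
          by (metis norm_triangle_ineq)
        then have "(l + m) * cmod (s x) \<le> cmod (P x) + (l * m) * cmod (Q x)"
          using lp mp by (simp add: norm_mult del: of_real_add)
        then have "((l + m) * cmod (s x))^2 \<le> (cmod (P x) + (l * m) * cmod (Q x))^2"
          using lp mp by (intro power_mono) auto
        also have "\<dots> \<le> (1 + (l*m)^2) * ((cmod (P x))^2 + (cmod (Q x))^2)" by (rule cs_ineq)
        finally have "(l + m)^2 * (cmod (s x))^2 \<le> (1 + l^2 * m^2) * ((cmod (P x))^2 + (cmod (Q x))^2)"
          by (simp add: power_mult_distrib)
        then show "(l + m)^2 / (1 + l^2 * m^2) * (cmod (s x))^2 \<le> (cmod (P x))^2 + (cmod (Q x))^2"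
          using D by (simp add: field_simps)
      qed
      fix t assume "0 \<le> t" "psd (L - t *\<^sub>R ones_mat)"
      from wit[OF this(2), of "\<lambda>k. if k = i then l - l^2 * m^3 else if k = j then l^3 * m^2 - m else 0"]
      have W: "t * (l - l^2 * m^3 + (l^3 * m^2 - m))^2 \<le> (l * (l - l^2 * m^3) + m * (l^3 * m^2 - m))^2
          + (inverse l * (l - l^2 * m^3) + inverse m * (l^3 * m^2 - m))^2"
        using sum_two[OF ij, of "\<lambda>_. 1"] sum_two[OF ij, of lam] sum_two[OF ij, of "\<lambda>k. inverse (lam k)"]
        by (simp add: i j)
      have e1: "l - l^2 * m^3 + (l^3 * m^2 - m) = (l - m) * (1 + l^2 * m^2)" by (simp add: algebra_simps power2_eq_square power3_eq_cube)
      have e2: "l * (l - l^2 * m^3) + m * (l^3 * m^2 - m) = l^2 - m^2" by (simp add: algebra_simps power2_eq_square power3_eq_cube)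
      have e3: "inverse l * (l - l^2 * m^3) + inverse m * (l^3 * m^2 - m) = l * m * (l^2 - m^2)"
        using lp mp by (simp add: field_simps power2_eq_square power3_eq_cube)
      have e4: "((l - m) * (1 + l^2 * m^2))^2 = ((l - m)^2 * (1 + l^2 * m^2)) * (1 + l^2 * m^2)"
        by (simp add: power2_eq_square algebra_simps)
      have e5: "(l^2 - m^2)^2 + (l * m * (l^2 - m^2))^2 = (l + m)^2 * ((l - m)^2 * (1 + l^2 * m^2))"
        by (simp add: power2_eq_square algebra_simps)
      have "t * (((l - m)^2 * (1 + l^2 * m^2)) * (1 + l^2 * m^2)) \<le> (l + m)^2 * ((l - m)^2 * (1 + l^2 * m^2))"
        using W unfolding e1 e2 e3 e4 e5 .
      then have "t * ((l - m)^2 * (1 + l^2 * m^2)) * (1 + l^2 * m^2) \<le> (l + m)^2 * ((l - m)^2 * (1 + l^2 * m^2))"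
        by (simp only: mult.assoc)
      moreover have "(l - m)^2 * (1 + l^2 * m^2) > 0" using lm D by simp
      ultimately have "(t * (1 + l^2 * m^2)) * ((l - m)^2 * (1 + l^2 * m^2)) \<le> (l + m)^2 * ((l - m)^2 * (1 + l^2 * m^2))"
        and "(l - m)^2 * (1 + l^2 * m^2) > 0" by (simp_all add: ac_simps)
      then have "t * (1 + l^2 * m^2) \<le> (l + m)^2" by (simp only: mult_le_cancel_right_pos)
      then show "t \<le> (l + m)^2 / (1 + l^2 * m^2)" using D by (simp add: field_simps)
    qed
  qed
  have three: "Ind L = 0" if c3: "card S > 2"
  proof -
    obtain a where a: "a \<in> S" using c3 by fastforce
    obtain b where b: "b \<in> S" "b \<noteq> a"
    proof -
      have "S \<noteq> {a}" using c3 by auto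
      then show ?thesis using a that by blast
    qed
    obtain c where c: "c \<in> S" "c \<noteq> a" "c \<noteq> b"
    proof -
      have "\<not> S \<subseteq> {a, b}"
      proof
        assume "S \<subseteq> {a, b}"
        then have "card S \<le> card {a, b}" by (rule card_mono[rotated]) simp
        also have "card {a, b} \<le> 2" by (cases "a = b") auto
        finally show False using c3 by simp
      qed
      then show ?thesis using that by blast
    qed
    obtain i where i: "lam i = a" using a unfolding S_def by auto
    obtain j where j: "lam j = b" using b unfolding S_def by auto
    obtain k where k: "lam k = c" using c unfolding S_def by auto
    have ij: "i \<noteq> j" "i \<noteq> k" "j \<noteq> k" using i j k b c by auto
    have ap: "a > 0" "b > 0" "c > 0" using i j k pos by auto
    show ?thesis
    proof (rule Ind_eq)
      show "psd (L - 0 *\<^sub>R ones_mat)" using psdL by simp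
      fix t assume "0 \<le> t" "psd (L - t *\<^sub>R ones_mat)"
      from wit[OF this(2), of "\<lambda>r. if r = i then a * (b^2 - c^2) else if r = j then b * (c^2 - a^2) else if r = k then c * (a^2 - b^2) else 0"]
      have "t * (a * (b^2 - c^2) + b * (c^2 - a^2) + c * (a^2 - b^2))^2 \<le>
          (a * (a * (b^2 - c^2)) + b * (b * (c^2 - a^2)) + c * (c * (a^2 - b^2)))^2
          + (inverse a * (a * (b^2 - c^2)) + inverse b * (b * (c^2 - a^2)) + inverse c * (c * (a^2 - b^2)))^2"
        using sum_three[OF ij, of "\<lambda>_. 1"] sum_three[OF ij, of lam] sum_three[OF ij, of "\<lambda>k. inverse (lam k)"]
        by (simp add: i j k)
      moreover have "a * (a * (b^2 - c^2)) + b * (b * (c^2 - a^2)) + c * (c * (a^2 - b^2)) = 0"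
        by (simp add: algebra_simps power2_eq_square)
      moreover have "inverse a * (a * (b^2 - c^2)) + inverse b * (b * (c^2 - a^2)) + inverse c * (c * (a^2 - b^2)) = 0"
        using ap by (simp add: field_simps power2_eq_square)
      moreover have "a * (b^2 - c^2) + b * (c^2 - a^2) + c * (a^2 - b^2) = - ((a - b) * (b - c) * (a - c))"
        by (simp add: algebra_simps power2_eq_square)
      moreover have "(a - b) * (b - c) * (a - c) \<noteq> 0" using b c by auto
      ultimately have "t * ((a - b) * (b - c) * (a - c))^2 \<le> 0 * ((a - b) * (b - c) * (a - c))^2"
        and "((a - b) * (b - c) * (a - c))^2 > 0" by simp_all
      then show "t \<le> 0" by (simp only: mult_le_cancel_right_pos)
    qed simp
  qed
  have ne: "S \<noteq> {}" unfolding S_def by simp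
  have last: "Ind L \<noteq> 0 \<longleftrightarrow> card S \<le> 2"
  proof
    assume "Ind L \<noteq> 0" then show "card S \<le> 2" using three by fastforce
  next
    assume le: "card S \<le> 2"
    have "card S \<noteq> 0" using fin ne by simp
    then have "card S = 1 \<or> card S = 2" using le by linarith
    then show "Ind L \<noteq> 0"
    proof
      assume "card S = 1"
      then obtain l where l1: "S = {l}" by (auto simp: card_1_singleton_iff)
      then have "l > 0" using Spos by auto
      then have "l^2 + inverse (l^2) > 0" by (intro add_pos_pos) simp_all
      then show ?thesis using one[OF l1] by simp
    next
      assume "card S = 2"
      then obtain l m where lm: "l \<noteq> m" "S = {l, m}" by (auto simp: card_2_iff)
      then have "l > 0" "m > 0" using Spos by auto
      moreover have "1 + l^2 * m^2 > 0" by (intro add_pos_nonneg) simp_all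
      ultimately show ?thesis using two[OF lm] by simp
    qed
  qed
  show ?thesis using psdL one two three last by blast
qed

end
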